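(* Let $S$ be a category, $M=\mathrm{U_{mon}}(S)$, and $a\in S$. Then $\varepsilon_S(a)\leqslant_M 1$ iff $a\leqslant_S \mathrm{s}(a)$, and $\varepsilon_S(a)\mathbin{\widetilde\leqslant}_M 1$ iff $a\mathbin{\widetilde\leqslant}_S\mathrm{t}(a)$. Furthermore, for every $\boldsymbol{b}\in M\setminus\{1\}$: if $a$ is not right invertible in $S$, then $\varepsilon_S(a)\leqslant_M\boldsymbol{b}$ iff $a\leqslant_S\nabla_0(\boldsymbol{b})$; and if $a$ is not left invertible in $S$, then $\varepsilon_S(a)\mathbin{\widetilde\leqslant}_M\boldsymbol{b}$ iff $a\mathbin{\widetilde\leqslant}_S\nabla_1(\boldsymbol{b})$.
   Context: Categories are arrow-only: a set $S$ with partial associative multiplication, identities $\mathrm{Id}\,S$, source/target identities $\mathrm{s}(x),\mathrm{t}(x)$. $\mathrm{U_{mon}}(S)$ is the monoid presented by generators $\varepsilon_S(x)$ ($x\in S$) and relations $\varepsilon_S(e)=1$ ($e\in\mathrm{Id}\,S$), $\varepsilon_S(x)\varepsilon_S(y)=\varepsilon_S(xy)$ whenever $xy$ is defined. Every $\boldsymbol{b}\in\mathrm{U_{mon}}(S)$ can be written uniquely as $\varepsilon_S(b_1)\cdots\varepsilon_S(b_n)$ with each $b_i\notin\mathrm{Id}\,S$ and each product $b_ib_{i+1}$ undefined (the reduced sequence $(b_1,\dots,b_n)$ of $\boldsymbol b$); for $\boldsymbol b\ne1$ (i.e. $n>0$), set $\nabla_0(\boldsymbol{b})=b_1$ and $\nabla_1(\boldsymbol{b})=b_n$.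 In any category (or monoid) $C$, $a\leqslant_C b$ means $b=ax$ for some $x\in C$, and $a\mathbin{\widetilde\leqslant}_C b$ means $b=xa$ for some $x\in C$. $a$ is right (left) invertible if $ax$ (resp. $xa$) is an identity for some $x$. *)

theory Defs
  imports "HOL-Algebra.Group"
begin

text \<open>Arrow-only categories: a carrier S with a partial multiplication m
  (m x y = None means xy undefined). Composition is written diagrammatically:
  xy is defined iff t(x) = s(y).\<close>

definition Idt :: "'a set \<Rightarrow> ('a \<Rightarrow> 'a \<Rightarrow> 'a option) \<Rightarrow> 'a set" where
  "Idt S m = {e \<in> S. \<forall>x\<in>S. (m e x \<noteq> None \<longrightarrow> m e x = Some x)
                              \<and> (m x e \<noteq> None \<longrightarrow> m x e = Some x)}"

definition category :: "'a set \<Rightarrow> ('a \<Rightarrow> 'a \<Rightarrow> 'a option) \<Rightarrow> bool" where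
  "category S m \<longleftrightarrow>
     (\<forall>x\<in>S. \<forall>y\<in>S. \<forall>z. m x y = Some z \<longrightarrow> z \<in> S)
   \<and> (\<forall>x y. m x y \<noteq> None \<longrightarrow> x \<in> S \<and> y \<in> S)
   \<and> (\<forall>x\<in>S. \<forall>y\<in>S. \<forall>z\<in>S.
        Option.bind (m x y) (\<lambda>u. m u z) = Option.bind (m y z) (\<lambda>v. m x v))
   \<and> (\<forall>x\<in>S. \<forall>y\<in>S. \<forall>z\<in>S. m x y \<noteq> None \<longrightarrow> m y z \<noteq> None \<longrightarrow>
        Option.bind (m x y) (\<lambda>u. m u z) \<noteq> None)
   \<and> (\<forall>x\<in>S. (\<exists>e\<in>Idt S m. m e x \<noteq> None) \<and> (\<exists>e\<in>Idt S m. m x e \<noteq> None))"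

definition src :: "'a set \<Rightarrow> ('a \<Rightarrow> 'a \<Rightarrow> 'a option) \<Rightarrow> 'a \<Rightarrow> 'a" where
  "src S m x = (THE e. e \<in> Idt S m \<and> m e x \<noteq> None)"

definition tgt :: "'a set \<Rightarrow> ('a \<Rightarrow> 'a \<Rightarrow> 'a option) \<Rightarrow> 'a \<Rightarrow> 'a" where
  "tgt S m x = (THE e. e \<in> Idt S m \<and> m x e \<noteq> None)"

definition cat_le :: "'a set \<Rightarrow> ('a \<Rightarrow> 'a \<Rightarrow> 'a option) \<Rightarrow> 'a \<Rightarrow> 'a \<Rightarrow> bool" where
  "cat_le S m a b \<longleftrightarrow> (\<exists>x\<in>S. m a x = Some b)"

definition cat_rle :: "'a set \<Rightarrow> ('a \<Rightarrow> 'a \<Rightarrow> 'a option) \<Rightarrow> 'a \<Rightarrow> 'a \<Rightarrow> bool" where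
  "cat_rle S m a b \<longleftrightarrow> (\<exists>x\<in>S. m x a = Some b)"

definition right_invertible :: "'a set \<Rightarrow> ('a \<Rightarrow> 'a \<Rightarrow> 'a option) \<Rightarrow> 'a \<Rightarrow> bool" where
  "right_invertible S m a \<longleftrightarrow> (\<exists>x\<in>S. \<exists>e\<in>Idt S m. m a x = Some e)"

definition left_invertible :: "'a set \<Rightarrow> ('a \<Rightarrow> 'a \<Rightarrow> 'a option) \<Rightarrow> 'a \<Rightarrow> bool" where
  "left_invertible S m a \<longleftrightarrow> (\<exists>x\<in>S. \<exists>e\<in>Idt S m. m x a = Some e)"

inductive ucong :: "'a set \<Rightarrow> ('a \<Rightarrow> 'a \<Rightarrow> 'a option) \<Rightarrow> 'a list \<Rightarrow> 'a list \<Rightarrow> bool"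
  for S m where
  urefl: "w \<in> lists S \<Longrightarrow> ucong S m w w"
| usym: "ucong S m u v \<Longrightarrow> ucong S m v u"
| utrans: "ucong S m u v \<Longrightarrow> ucong S m v w \<Longrightarrow> ucong S m u w"
| uid: "e \<in> Idt S m \<Longrightarrow> ucong S m [e] []"
| umul: "x \<in> S \<Longrightarrow> y \<in> S \<Longrightarrow> m x y = Some z \<Longrightarrow> ucong S m [x, y] [z]"
| ucompat: "ucong S m u v \<Longrightarrow> p \<in> lists S \<Longrightarrow> q \<in> lists S \<Longrightarrow>
             ucong S m (p @ u @ q) (p @ v @ q)"

definition ucls :: "'a set \<Rightarrow> ('a \<Rightarrow> 'a \<Rightarrow> 'a option) \<Rightarrow> 'a list \<Rightarrow> 'a list set" where
  "ucls S m w = {v. ucong S m w v}"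

definition Umon :: "'a set \<Rightarrow> ('a \<Rightarrow> 'a \<Rightarrow> 'a option) \<Rightarrow> 'a list set monoid" where
  "Umon S m = \<lparr> carrier = ucls S m ` lists S,
                mult = (\<lambda>A B. ucls S m ((SOME u. u \<in> A) @ (SOME v. v \<in> B))),
                one = ucls S m [] \<rparr>"

definition eps :: "'a set \<Rightarrow> ('a \<Rightarrow> 'a \<Rightarrow> 'a option) \<Rightarrow> 'a \<Rightarrow> 'a list set" where
  "eps S m x = ucls S m [x]"

definition mon_le :: "('b, 'c) monoid_scheme \<Rightarrow> 'b \<Rightarrow> 'b \<Rightarrow> bool" where
  "mon_le M a b \<longleftrightarrow> (\<exists>x\<in>carrier M. b = a \<otimes>\<^bsub>M\<^esub> x)"

definition mon_rle :: "('b, 'c) monoid_scheme \<Rightarrow> 'b \<Rightarrow> 'b \<Rightarrow> bool" where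
  "mon_rle M a b \<longleftrightarrow> (\<exists>x\<in>carrier M. b = x \<otimes>\<^bsub>M\<^esub> a)"

definition reduced :: "'a set \<Rightarrow> ('a \<Rightarrow> 'a \<Rightarrow> 'a option) \<Rightarrow> 'a list \<Rightarrow> bool" where
  "reduced S m bs \<longleftrightarrow> bs \<in> lists S \<and> (\<forall>x\<in>set bs. x \<notin> Idt S m)
     \<and> (\<forall>i. Suc i < length bs \<longrightarrow> m (bs ! i) (bs ! Suc i) = None)"

definition redseq :: "'a set \<Rightarrow> ('a \<Rightarrow> 'a \<Rightarrow> 'a option) \<Rightarrow> 'a list set \<Rightarrow> 'a list" where
  "redseq S m b = (THE bs. reduced S m bs \<and> ucls S m bs = b)"

definition nabla0 :: "'a set \<Rightarrow> ('a \<Rightarrow> 'a \<Rightarrow> 'a option) \<Rightarrow> 'a list set \<Rightarrow> 'a" where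
  "nabla0 S m b = hd (redseq S m b)"

definition nabla1 :: "'a set \<Rightarrow> ('a \<Rightarrow> 'a \<Rightarrow> 'a option) \<Rightarrow> 'a list set \<Rightarrow> 'a" where
  "nabla1 S m b = last (redseq S m b)"

end

theory Submission imports Defs begin

fun pr :: "'a set \<Rightarrow> ('a\<Rightarrow>'a\<Rightarrow>'a option) \<Rightarrow> 'a list \<Rightarrow> 'a \<Rightarrow> 'a list" where
  "pr S m [] x = (if x \<in> Idt S m then [] else [x])"
| "pr S m (c#cs) x = (if x \<in> Idt S m then c#cs else
     (case m c x of Some w \<Rightarrow> pr S m cs w | None \<Rightarrow> x#c#cs))"

definition rred :: "'a set \<Rightarrow> ('a\<Rightarrow>'a\<Rightarrow>'a option) \<Rightarrow> 'a list \<Rightarrow> bool" where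
  "rred S m st \<longleftrightarrow> st \<in> lists S \<and> (\<forall>x\<in>set st. x \<notin> Idt S m) \<and> successively (\<lambda>x y. m y x = None) st"

lemma rred_Nil[simp]: "rred S m []" by (simp add: rred_def)
lemma rred_Cons: "rred S m (x # st) \<longleftrightarrow> x \<in> S \<and> x \<notin> Idt S m \<and> rred S m st \<and> (st \<noteq> [] \<longrightarrow> m (hd st) x = None)"
  by (auto simp: rred_def successively_Cons)

lemma rred_append: "rred S m (a @ b) \<Longrightarrow> rred S m b"
  by (auto simp: rred_def successively_append_iff)

lemma reduced_alt: "reduced S m bs \<longleftrightarrow> bs \<in> lists S \<and> (\<forall>x\<in>set bs. x \<notin> Idt S m) \<and> successively (\<lambda>x y. m x y = None) bs"
  by (simp add: reduced_def successively_conv_nth)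

lemma reduced_rred: "reduced S m bs \<longleftrightarrow> rred S m (rev bs)"
  by (simp add: reduced_alt rred_def in_lists_conv_set)

lemma pr_Idt: "e \<in> Idt S m \<Longrightarrow> pr S m st e = st"
  by (cases st) auto

lemma pr_cons_red: "rred S m (x#st) \<Longrightarrow> pr S m st x = x#st"
  by (cases st) (auto simp: rred_Cons)

lemma ucong_rev: "ucong S m u v \<Longrightarrow> ucong S (\<lambda>x y. m y x) (rev u) (rev v)"
proof (induction rule: ucong.induct)
  case (urefl w) then show ?case by (intro ucong.urefl) (simp add: in_lists_conv_set)
next
  case (usym u v) then show ?case by (simp add: ucong.usym)
next
  case (utrans u v w) then show ?case by (meson ucong.utrans)
next
  case (uid e)
  have "Idt S (\<lambda>x y. m y x) = Idt S m" unfolding Idt_def by auto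
  with uid show ?case by (simp add: ucong.uid)
next
  case (umul x y z) then show ?case using ucong.umul[of y S x "\<lambda>x y. m y x" z] by simp
next
  case (ucompat u v p q) then show ?case using ucong.ucompat[of S "\<lambda>x y. m y x" "rev u" "rev v" "rev q" "rev p"] by (simp add: in_lists_conv_set)
qed

lemma ucong_rev_iff: "ucong S (\<lambda>x y. m y x) u v \<longleftrightarrow> ucong S m (rev u) (rev v)"
  using ucong_rev[of S m "rev u" "rev v"] ucong_rev[of S "\<lambda>x y. m y x" u v] by auto

lemma Idt_op: "Idt S (\<lambda>x y. m y x) = Idt S m" unfolding Idt_def by auto

lemma reduced_op: "reduced S (\<lambda>x y. m y x) (rev bs) \<longleftrightarrow> reduced S m bs"
  unfolding reduced_alt Idt_op[of S m] by (simp add: in_lists_conv_set)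

locale catl =
  fixes S :: "'a set" and m :: "'a \<Rightarrow> 'a \<Rightarrow> 'a option"
  assumes cat: "category S m"
begin

lemma closed: "x \<in> S \<Longrightarrow> y \<in> S \<Longrightarrow> m x y = Some z \<Longrightarrow> z \<in> S"
  using cat unfolding category_def by blast
lemma dom: "m x y \<noteq> None \<Longrightarrow> x \<in> S \<and> y \<in> S"
  using cat unfolding category_def by blast
lemma closed': "m x y = Some z \<Longrightarrow> z \<in> S"
  using closed dom by blast
lemma assoc: "x \<in> S \<Longrightarrow> y \<in> S \<Longrightarrow> z \<in> S \<Longrightarrow>
   Option.bind (m x y) (\<lambda>u. m u z) = Option.bind (m y z) (\<lambda>v. m x v)"
  using cat unfolding category_def by blast
lemma ax4: "x \<in> S \<Longrightarrow> y \<in> S \<Longrightarrow> z \<in> S \<Longrightarrow> m x y \<noteq> None \<Longrightarrow> m y z \<noteq> None \<Longrightarrow>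
        Option.bind (m x y) (\<lambda>u. m u z) \<noteq> None"
  using cat unfolding category_def by blast
lemma ex_lid: "x \<in> S \<Longrightarrow> \<exists>e\<in>Idt S m. m e x \<noteq> None"
  using cat unfolding category_def by blast
lemma ex_rid: "x \<in> S \<Longrightarrow> \<exists>e\<in>Idt S m. m x e \<noteq> None"
  using cat unfolding category_def by blast
lemma Idt_S: "e \<in> Idt S m \<Longrightarrow> e \<in> S" unfolding Idt_def by blast
lemma id_left: "e \<in> Idt S m \<Longrightarrow> m e x = Some z \<Longrightarrow> z = x"
  using dom[of e x] unfolding Idt_def by force
lemma id_right: "e \<in> Idt S m \<Longrightarrow> m x e = Some z \<Longrightarrow> z = x"
  using dom[of x e] unfolding Idt_def by force

lemma key: assumes "m x y = Some z" "c \<in> S"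
  shows "m c x = None \<longleftrightarrow> m c z = None" and "m c x = Some w \<Longrightarrow> m w y = m c z \<and> m w y \<noteq> None"
proof -
  have xy: "x \<in> S" "y \<in> S" using dom assms(1) by auto
  have A: "Option.bind (m c x) (\<lambda>u. m u y) = m c z" using assoc[OF assms(2) xy] assms(1) by simp
  show "m c x = None \<longleftrightarrow> m c z = None"
  proof
    assume "m c x = None" then show "m c z = None" using A by simp
  next
    assume "m c z = None"
    then show "m c x = None" using A ax4[OF assms(2) xy] assms(1) by (cases "m c x") auto
  qed
  show "m c x = Some w \<Longrightarrow> m w y = m c z \<and> m w y \<noteq> None"
    using A ax4[OF assms(2) xy] assms(1) by auto
qed

lemma mirror: assumes "m x y = Some z" "c \<in> S"
  shows "m y c = None \<longleftrightarrow> m z c = None" and "m y c = Some w \<Longrightarrow> m x w = m z c \<and> m x w \<noteq> None"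
proof -
  have xy: "x \<in> S" "y \<in> S" using dom assms(1) by auto
  have A: "Option.bind (m y c) (\<lambda>v. m x v) = m z c" using assoc[OF xy assms(2)] assms(1) by simp
  show "m y c = None \<longleftrightarrow> m z c = None"
  proof
    assume "m y c = None" then show "m z c = None" using A by simp
  next
    assume "m z c = None"
    then show "m y c = None" using A ax4[OF xy assms(2)] assms(1) by (cases "m y c") auto
  qed
  show "m y c = Some w \<Longrightarrow> m x w = m z c \<and> m x w \<noteq> None"
    using A ax4[OF xy assms(2)] assms(1) by auto
qed

lemma pr_red: "rred S m st \<Longrightarrow> x \<in> S \<Longrightarrow> rred S m (pr S m st x)"
proof (induction st arbitrary: x)
  case Nil then show ?case by (simp add: rred_Cons)
next
  case (Cons c cs)
  show ?case
  proof (cases "x \<in> Idt S m")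
    case True then show ?thesis using Cons by simp
  next
    case False
    show ?thesis
    proof (cases "m c x")
      case None then show ?thesis using Cons False by (simp add: rred_Cons)
    next
      case (Some w)
      then have "w \<in> S" using closed' by blast
      then show ?thesis using Cons False Some by (simp add: rred_Cons)
    qed
  qed
qed

lemma pr_pr: "rred S m st \<Longrightarrow> m x y = Some z \<Longrightarrow> pr S m (pr S m st x) y = pr S m st z"
proof (induction st arbitrary: x y z)
  case Nil
  show ?case
  proof (cases "x \<in> Idt S m")
    case True then show ?thesis using Nil id_left by force
  next
    case False
    show ?thesis
    proof (cases "y \<in> Idt S m")
      case True then have "z = x" using Nil id_right by blast
      then show ?thesis using True by (simp add: pr_Idt)
    next
      case False2: False
      then show ?thesis using False Nil by simp
    qed
  qed
next
  case (Cons c cs)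
  have cS: "c \<in> S" and rcs: "rred S m cs" using Cons.prems by (auto simp: rred_Cons)
  show ?case
  proof (cases "x \<in> Idt S m")
    case True then show ?thesis using Cons id_left by force
  next
    case xn: False
    show ?thesis
    proof (cases "y \<in> Idt S m")
      case True then have "z = x" using Cons id_right by blast
      then show ?thesis using True by (simp add: pr_Idt)
    next
      case yn: False
      show ?thesis
      proof (cases "m c x")
        case None
        then show ?thesis using xn yn Cons.prems by simp
      next
        case (Some w)
        obtain v where v: "m w y = Some v" "m c z = Some v"
          using key(2)[OF Cons.prems(2) cS Some] by (cases "m c z") auto
        have IH: "pr S m (pr S m cs w) y = pr S m cs v" using Cons.IH[OF rcs v(1)] .
        show ?thesis
        proof (cases "z \<in> Idt S m")
          case True
          then have "v = c" using id_right v(2) by blast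
          then show ?thesis using IH xn Some True pr_cons_red[OF Cons.prems(1)] by simp
        next
          case False
          then show ?thesis using IH xn Some v by simp
        qed
      qed
    qed
  qed
qed


lemma ucong_lists: "ucong S m u v \<Longrightarrow> u \<in> lists S \<and> v \<in> lists S"
  by (induction rule: ucong.induct) (auto simp: Idt_S dest: closed)

lemma F_red: "rred S m st \<Longrightarrow> w \<in> lists S \<Longrightarrow> rred S m (foldl (pr S m) st w)"
  by (induction w arbitrary: st) (auto simp: pr_red)

lemma F_cong: "ucong S m u v \<Longrightarrow> rred S m st \<Longrightarrow> foldl (pr S m) st u = foldl (pr S m) st v"
proof (induction arbitrary: st rule: ucong.induct)
  case (uid e) then show ?case by (simp add: pr_Idt)
next
  case (umul x y z) then show ?case by (simp add: pr_pr)
next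
  case (ucompat u v p q)
  have "rred S m (foldl (pr S m) st p)" using F_red ucompat by blast
  then show ?case using ucompat by simp
qed auto

lemma pr_ucong: "rred S m st \<Longrightarrow> x \<in> S \<Longrightarrow> ucong S m (rev st @ [x]) (rev (pr S m st x))"
proof (induction st arbitrary: x)
  case Nil then show ?case by (auto intro: ucong.uid ucong.urefl)
next
  case (Cons c cs)
  have cS: "c \<in> S" and rcs: "rred S m cs" using Cons.prems by (auto simp: rred_Cons)
  have L: "rev cs \<in> lists S" using rcs by (simp add: rred_def in_lists_conv_set)
  show ?case
  proof (cases "x \<in> Idt S m")
    case True
    have "ucong S m ((rev cs @ [c]) @ [x] @ []) ((rev cs @ [c]) @ [] @ [])"
      by (rule ucong.ucompat[OF ucong.uid[OF True]]) (use L cS in auto)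
    then show ?thesis using True by simp
  next
    case xn: False
    show ?thesis
    proof (cases "m c x")
      case None
      then show ?thesis using xn Cons.prems L cS by (auto intro!: ucong.urefl)
    next
      case (Some w)
      have wS: "w \<in> S" using closed' Some by blast
      have "ucong S m (rev cs @ [c, x] @ []) (rev cs @ [w] @ [])"
        by (rule ucong.ucompat[OF ucong.umul[where m=m, OF cS Cons.prems(2) Some]]) (use L in auto)
      then have "ucong S m (rev (c#cs) @ [x]) (rev cs @ [w])" by simp
      moreover have "ucong S m (rev cs @ [w]) (rev (pr S m cs w))" using Cons.IH[OF rcs wS] .
      ultimately have "ucong S m (rev (c#cs) @ [x]) (rev (pr S m cs w))" by (rule ucong.utrans)
      then show ?thesis using xn Some by simp
    qed
  qed
qed

lemma F_ucong: "rred S m st \<Longrightarrow> w \<in> lists S \<Longrightarrow> ucong S m (rev st @ w) (rev (foldl (pr S m) st w))"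
proof (induction w arbitrary: st)
  case Nil then show ?case by (auto intro: ucong.urefl simp: rred_def in_lists_conv_set)
next
  case (Cons x w)
  have xS: "x \<in> S" and wL: "w \<in> lists S" using Cons.prems by auto
  have r: "rred S m (pr S m st x)" using pr_red Cons.prems xS by blast
  have "ucong S m ([] @ (rev st @ [x]) @ w) ([] @ rev (pr S m st x) @ w)"
    by (rule ucong.ucompat[OF pr_ucong[OF Cons.prems(1) xS]]) (use wL in auto)
  then have "ucong S m (rev st @ x # w) (rev (pr S m st x) @ w)" by simp
  from ucong.utrans[OF this Cons.IH[OF r wL]] show ?case by simp
qed

lemma F_reduced: "rred S m (rev bs @ st) \<Longrightarrow> foldl (pr S m) st bs = rev bs @ st"
proof (induction bs arbitrary: st)
  case Nil then show ?case by simp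
next
  case (Cons x bs)
  have "rred S m (x # st)" using rred_append[of _ _ "rev bs" "x # st"] Cons.prems by simp
  then have "pr S m st x = x # st" by (rule pr_cons_red)
  then show ?case using Cons.IH[of "x # st"] Cons.prems by simp
qed

lemma nf_reduced: "reduced S m bs \<Longrightarrow> foldl (pr S m) [] bs = rev bs"
  using F_reduced[of bs "[]"] by (simp add: reduced_rred)

lemma reduced_unique: "reduced S m bs \<Longrightarrow> reduced S m cs \<Longrightarrow> ucong S m bs cs \<Longrightarrow> bs = cs"
  using F_cong[of bs cs "[]"] nf_reduced by fastforce

lemma nf_exists: "w \<in> lists S \<Longrightarrow> reduced S m (rev (foldl (pr S m) [] w)) \<and> ucong S m w (rev (foldl (pr S m) [] w))"
  using F_red[of "[]" w] F_ucong[of "[]" w] by (simp add: reduced_rred)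

lemma idt_self: "e \<in> Idt S m \<Longrightarrow> m e e = Some e"
proof -
  assume e: "e \<in> Idt S m"
  obtain f where f: "f \<in> Idt S m" "m f e \<noteq> None" using ex_lid Idt_S[OF e] by blast
  then obtain z where z: "m f e = Some z" by blast
  have "z = e" using id_left[OF f(1) z] .
  moreover have "z = f" using id_right[OF e z] .
  ultimately show ?thesis using z by simp
qed

lemma idt_uniq: "e \<in> Idt S m \<Longrightarrow> e' \<in> Idt S m \<Longrightarrow> m e x \<noteq> None \<Longrightarrow> m e' x \<noteq> None \<Longrightarrow> e = e'"
proof -
  assume e: "e \<in> Idt S m" and e': "e' \<in> Idt S m" and h: "m e x \<noteq> None" "m e' x \<noteq> None"
  have xS: "x \<in> S" using dom h by blast
  obtain y where y: "m e' x = Some y" using h by blast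
  have "y = x" using id_left[OF e' y] .
  then have "Option.bind (m e e') (\<lambda>u. m u x) = m e x"
    using assoc[OF Idt_S[OF e] Idt_S[OF e'] xS] y by simp
  then have "m e e' \<noteq> None" using h by (cases "m e e'") auto
  then obtain z where z: "m e e' = Some z" by blast
  show "e = e'" using id_left[OF e z] id_right[OF e' z] by simp
qed

lemma src_eq: "e \<in> Idt S m \<Longrightarrow> m e x \<noteq> None \<Longrightarrow> src S m x = e"
  unfolding src_def using idt_uniq by blast

lemma src_Idt: "x \<in> S \<Longrightarrow> src S m x \<in> Idt S m"
  using ex_lid[of x] src_eq by metis

lemma cat_le_self: "a \<in> S \<Longrightarrow> cat_le S m a a"
proof -
  assume a: "a \<in> S"
  obtain e where e: "e \<in> Idt S m" "m a e \<noteq> None" using ex_rid a by blast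
  then obtain z where "m a e = Some z" by blast
  then show ?thesis using id_right[OF e(1)] e Idt_S unfolding cat_le_def by blast
qed

lemma P_pr: "rred S m st \<Longrightarrow> x \<in> S \<Longrightarrow> st \<noteq> [] \<Longrightarrow> cat_le S m a (last st) \<Longrightarrow>
   \<not> right_invertible S m a \<Longrightarrow> pr S m st x \<noteq> [] \<and> cat_le S m a (last (pr S m st x))"
proof (induction st arbitrary: x)
  case Nil then show ?case by simp
next
  case (Cons c cs)
  have cS: "c \<in> S" and rcs: "rred S m cs" using Cons.prems by (auto simp: rred_Cons)
  show ?case
  proof (cases "x \<in> Idt S m")
    case True then show ?thesis using Cons.prems by simp
  next
    case xn: False
    show ?thesis
    proof (cases "m c x")
      case None then show ?thesis using xn Cons.prems by simp
    next
      case (Some w)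
      have wS: "w \<in> S" using closed' Some by blast
      show ?thesis
      proof (cases "cs = []")
        case False
        then show ?thesis using Cons.IH[OF rcs wS] Cons.prems xn Some by simp
      next
        case True
        then obtain y where y: "y \<in> S" "m a y = Some c" using Cons.prems by (auto simp: cat_le_def)
        have "m y x \<noteq> None" using mirror(1)[OF y(2) Cons.prems(2)] Some by auto
        then obtain u where u: "m y x = Some u" by blast
        have uS: "u \<in> S" using closed' u by blast
        have au: "m a u = Some w" using mirror(2)[OF y(2) Cons.prems(2) u] Some by simp
        have "w \<notin> Idt S m" using au uS Cons.prems(5) unfolding right_invertible_def by blast
        moreover have "cat_le S m a w" using au uS unfolding cat_le_def by blast
        ultimately show ?thesis using True xn Some by simp
      qed
    qed
  qed
qed

lemma P_F: "rred S m st \<Longrightarrow> w \<in> lists S \<Longrightarrow> st \<noteq> [] \<Longrightarrow> cat_le S m a (last st) \<Longrightarrow>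
   \<not> right_invertible S m a \<Longrightarrow> foldl (pr S m) st w \<noteq> [] \<and> cat_le S m a (last (foldl (pr S m) st w))"
proof (induction w arbitrary: st)
  case Nil then show ?case by simp
next
  case (Cons x w)
  show ?case using Cons.IH[of "pr S m st x"] P_pr[of st x a] pr_red[of st x] Cons.prems by simp
qed

lemma nonrinv_start: "a \<in> S \<Longrightarrow> \<not> right_invertible S m a \<Longrightarrow> w \<in> lists S \<Longrightarrow>
   foldl (pr S m) [] (a#w) \<noteq> [] \<and> cat_le S m a (last (foldl (pr S m) [] (a#w)))"
proof -
  assume a: "a \<in> S" and nr: "\<not> right_invertible S m a" and w: "w \<in> lists S"
  have "a \<notin> Idt S m" using idt_self nr unfolding right_invertible_def using Idt_S by blast
  then have "pr S m [] a = [a]" by simp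
  moreover have "rred S m [a]" using a \<open>a \<notin> Idt S m\<close> by (simp add: rred_Cons)
  ultimately show ?thesis using P_F[of "[a]" w a] w nr cat_le_self[OF a] by simp
qed

lemma L1: assumes a: "a \<in> S"
  shows "(\<exists>w\<in>lists S. ucong S m (a#w) []) \<longleftrightarrow> cat_le S m a (src S m a)"
proof
  assume "\<exists>w\<in>lists S. ucong S m (a#w) []"
  then obtain w where w: "w \<in> lists S" "ucong S m (a#w) []" by blast
  have E: "foldl (pr S m) [] (a#w) = []" using F_cong[OF w(2) rred_Nil] by (metis foldl_Nil)
  then have "right_invertible S m a" using nonrinv_start[OF a _ w(1)] by blast
  then obtain x e where xe: "x \<in> S" "e \<in> Idt S m" "m a x = Some e" unfolding right_invertible_def by blast
  obtain f where f: "f \<in> Idt S m" "m f a \<noteq> None" using ex_lid a by blast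
  then obtain z where z: "m f a = Some z" by blast
  have "z = a" using id_left[OF f(1) z] .
  then have "m f e = Some e" using assoc[OF Idt_S[OF f(1)] a xe(1)] z xe(3) by simp
  then have "f = e" using id_right[OF xe(2)] id_left[OF f(1)] by metis
  then have "src S m a = e" using src_eq[OF xe(2)] f by blast
  then show "cat_le S m a (src S m a)" using xe unfolding cat_le_def by blast
next
  assume "cat_le S m a (src S m a)"
  then obtain x where x: "x \<in> S" "m a x = Some (src S m a)" unfolding cat_le_def by blast
  have "ucong S m [a, x] [src S m a]" using ucong.umul[where m=m, OF a x(1) x(2)] .
  moreover have "ucong S m [src S m a] []" using ucong.uid src_Idt[OF a] .
  ultimately have "ucong S m (a#[x]) []" by (rule ucong.utrans)
  moreover have "[x] \<in> lists S" using x(1) by simp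
  ultimately show "\<exists>w\<in>lists S. ucong S m (a#w) []" by (rule bexI)
qed

lemma L2: assumes a: "a \<in> S" and nr: "\<not> right_invertible S m a" and bs: "reduced S m bs" "bs \<noteq> []"
  shows "(\<exists>w\<in>lists S. ucong S m (a#w) bs) \<longleftrightarrow> cat_le S m a (hd bs)"
proof
  assume "\<exists>w\<in>lists S. ucong S m (a#w) bs"
  then obtain w where w: "w \<in> lists S" "ucong S m (a#w) bs" by blast
  have E: "foldl (pr S m) [] (a#w) = rev bs" using F_cong[OF w(2) rred_Nil] nf_reduced[OF bs(1)] by metis
  have "last (rev bs) = hd bs" using bs(2) by (simp add: last_rev)
  then show "cat_le S m a (hd bs)" using nonrinv_start[OF a nr w(1)] E by metis
next
  assume "cat_le S m a (hd bs)"
  then obtain y where y: "y \<in> S" "m a y = Some (hd bs)" unfolding cat_le_def by blast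
  have tl: "tl bs \<in> lists S" using bs by (cases bs) (auto simp: reduced_def)
  have "ucong S m ([] @ [a, y] @ tl bs) ([] @ [hd bs] @ tl bs)"
    by (rule ucong.ucompat[OF ucong.umul[where m=m, OF a y]]) (use tl in auto)
  then have "ucong S m (a # (y # tl bs)) bs" using bs(2) by simp
  moreover have "y # tl bs \<in> lists S" using y(1) tl by simp
  ultimately show "\<exists>w\<in>lists S. ucong S m (a#w) bs" by (rule bexI)
qed

end

lemma category_op: assumes "category S m" shows "category S (\<lambda>x y. m y x)"
proof -
  interpret catl S m using assms by unfold_locales
  have A: "\<forall>x\<in>S. \<forall>y\<in>S. \<forall>z\<in>S. Option.bind (m y x) (\<lambda>u. m z u) = Option.bind (m z y) (\<lambda>v. m v x)"
    using assoc by metis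
  have B: "\<forall>x\<in>S. \<forall>y\<in>S. \<forall>z\<in>S. m y x \<noteq> None \<longrightarrow> m z y \<noteq> None \<longrightarrow> Option.bind (m y x) (\<lambda>u. m z u) \<noteq> None"
    using assoc ax4 by metis
  have C: "\<forall>x\<in>S. (\<exists>e\<in>Idt S m. m x e \<noteq> None) \<and> (\<exists>e\<in>Idt S m. m e x \<noteq> None)"
    using ex_lid ex_rid by blast
  have D: "\<forall>x\<in>S. \<forall>y\<in>S. \<forall>z. m y x = Some z \<longrightarrow> z \<in> S" using closed by blast
  have E: "\<forall>x y. m y x \<noteq> None \<longrightarrow> x \<in> S \<and> y \<in> S" using dom by blast
  show ?thesis unfolding category_def Idt_op[of S m] using A B C D E by (intro conjI)
qed

context catl begin

lemma ucls_eq: "ucong S m u v \<Longrightarrow> ucls S m u = ucls S m v"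
  unfolding ucls_def by (metis Collect_cong ucong.usym ucong.utrans)

lemma ucls_iff: "u \<in> lists S \<Longrightarrow> ucls S m u = ucls S m v \<longleftrightarrow> ucong S m u v"
proof
  assume u: "u \<in> lists S" and "ucls S m u = ucls S m v"
  moreover have "u \<in> ucls S m u" using u by (simp add: ucls_def ucong.urefl)
  ultimately show "ucong S m u v" unfolding ucls_def by (simp add: ucong.usym)
qed (rule ucls_eq)

lemma Umon_mult: assumes "u \<in> lists S" "v \<in> lists S"
  shows "ucls S m u \<otimes>\<^bsub>Umon S m\<^esub> ucls S m v = ucls S m (u @ v)"
proof -
  define u' where "u' = (SOME x. x \<in> ucls S m u)"
  define v' where "v' = (SOME x. x \<in> ucls S m v)"
  have "u \<in> ucls S m u" "v \<in> ucls S m v" using assms by (auto simp: ucls_def ucong.urefl)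
  then have cu: "ucong S m u u'" and cv: "ucong S m v v'" unfolding u'_def v'_def ucls_def
    by (metis mem_Collect_eq someI_ex)+
  have u'L: "u' \<in> lists S" using ucong_lists[OF cu] by blast
  have "ucong S m ([] @ u @ v) ([] @ u' @ v)" by (rule ucong.ucompat[OF cu]) (use assms in auto)
  moreover have "ucong S m (u' @ v @ []) (u' @ v' @ [])" by (rule ucong.ucompat[OF cv]) (use u'L in auto)
  ultimately have "ucong S m (u @ v) (u' @ v')" by (simp add: ucong.utrans)
  then show ?thesis unfolding Umon_def u'_def v'_def using ucls_eq by (simp add: ucls_eq)
qed

lemma mon_le_eps: assumes a: "a \<in> S"
  shows "mon_le (Umon S m) (eps S m a) b \<longleftrightarrow> (\<exists>w\<in>lists S. b = ucls S m (a#w))"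
proof -
  have car: "carrier (Umon S m) = ucls S m ` lists S" by (simp add: Umon_def)
  have eq: "\<And>w. w \<in> lists S \<Longrightarrow> eps S m a \<otimes>\<^bsub>Umon S m\<^esub> ucls S m w = ucls S m (a#w)"
    using Umon_mult[of "[a]"] a by (simp add: eps_def)
  show ?thesis unfolding mon_le_def car using eq by auto
qed

end


context catl begin
lemma mon_rle_eps: assumes a: "a \<in> S"
  shows "mon_rle (Umon S m) (eps S m a) b \<longleftrightarrow> (\<exists>w\<in>lists S. b = ucls S m (w@[a]))"
proof -
  have car: "carrier (Umon S m) = ucls S m ` lists S" by (simp add: Umon_def)
  have eq: "\<And>w. w \<in> lists S \<Longrightarrow> ucls S m w \<otimes>\<^bsub>Umon S m\<^esub> eps S m a = ucls S m (w@[a])"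
    using Umon_mult[of _ "[a]"] a by (simp add: eps_def)
  show ?thesis unfolding mon_rle_def car using eq by auto
qed

lemma redseq_eq: assumes "reduced S m bs" shows "redseq S m (ucls S m bs) = bs"
  unfolding redseq_def
proof (rule the_equality)
  fix cs assume "reduced S m cs \<and> ucls S m cs = ucls S m bs"
  then have "cs \<in> lists S" "reduced S m cs" "ucls S m cs = ucls S m bs" by (auto simp: reduced_def)
  then have "ucong S m cs bs" using ucls_iff by blast
  then show "cs = bs" using reduced_unique \<open>reduced S m cs\<close> assms by blast
qed (use assms in simp)
end

lemma R_parts: assumes "category S m" "a \<in> S"
  shows "(\<exists>w\<in>lists S. ucong S m (w@[a]) []) \<longleftrightarrow> cat_rle S m a (tgt S m a)"
    and "\<not> left_invertible S m a \<Longrightarrow> reduced S m bs \<Longrightarrow> bs \<noteq> [] \<Longrightarrow>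
         (\<exists>w\<in>lists S. ucong S m (w@[a]) bs) \<longleftrightarrow> cat_rle S m a (last bs)"
proof -
  interpret o: catl S "\<lambda>x y. m y x" using category_op[OF assms(1)] by unfold_locales
  have src: "src S (\<lambda>x y. m y x) = tgt S m" unfolding src_def tgt_def Idt_op[of S m] by simp
  have cl: "cat_le S (\<lambda>x y. m y x) = cat_rle S m" unfolding cat_le_def cat_rle_def by (intro ext) simp
  have ri: "right_invertible S (\<lambda>x y. m y x) = left_invertible S m"
    unfolding right_invertible_def left_invertible_def Idt_op[of S m] by (intro ext) simp
  have ex: "\<And>P. (\<exists>w\<in>lists S. P (rev w)) \<longleftrightarrow> (\<exists>w\<in>lists S. P w)"
    by (metis in_lists_conv_set rev_rev_ident set_rev)
  show "(\<exists>w\<in>lists S. ucong S m (w@[a]) []) \<longleftrightarrow> cat_rle S m a (tgt S m a)"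
    using o.L1[OF assms(2)] ex[of "\<lambda>w. ucong S m (w@[a]) []"] by (simp add: ucong_rev_iff[of S m] src cl)
  assume nl: "\<not> left_invertible S m a" and bs: "reduced S m bs" "bs \<noteq> []"
  have rb: "reduced S (\<lambda>x y. m y x) (rev bs)" using bs reduced_op by blast
  show "(\<exists>w\<in>lists S. ucong S m (w@[a]) bs) \<longleftrightarrow> cat_rle S m a (last bs)"
    using o.L2[OF assms(2) _ rb] nl bs(2) ex[of "\<lambda>w. ucong S m (w@[a]) bs"]
    by (simp add: ucong_rev_iff[of S m] ri cl hd_rev)
qed

theorem lemma5p3:
  fixes S :: "'a set" and m :: "'a \<Rightarrow> 'a \<Rightarrow> 'a option" and a :: 'a
  assumes "category S m" and "a \<in> S"
  shows "(mon_le (Umon S m) (eps S m a) \<one>\<^bsub>Umon S m\<^esub> \<longleftrightarrow> cat_le S m a (src S m a))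
    \<and> (mon_rle (Umon S m) (eps S m a) \<one>\<^bsub>Umon S m\<^esub> \<longleftrightarrow> cat_rle S m a (tgt S m a))
    \<and> (\<forall>b \<in> carrier (Umon S m) - {\<one>\<^bsub>Umon S m\<^esub>}.
          (\<not> right_invertible S m a \<longrightarrow>
             (mon_le (Umon S m) (eps S m a) b \<longleftrightarrow> cat_le S m a (nabla0 S m b)))
        \<and> (\<not> left_invertible S m a \<longrightarrow>
             (mon_rle (Umon S m) (eps S m a) b \<longleftrightarrow> cat_rle S m a (nabla1 S m b))))"
proof -
  interpret catl S m using assms(1) by unfold_locales
  have one: "\<one>\<^bsub>Umon S m\<^esub> = ucls S m []" by (simp add: Umon_def)
  have P1: "mon_le (Umon S m) (eps S m a) \<one>\<^bsub>Umon S m\<^esub> \<longleftrightarrow> cat_le S m a (src S m a)"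
  proof -
    have "mon_le (Umon S m) (eps S m a) \<one>\<^bsub>Umon S m\<^esub> \<longleftrightarrow> (\<exists>w\<in>lists S. ucong S m (a#w) [])"
      unfolding mon_le_eps[OF assms(2)] one using ucls_iff assms(2) by (metis Cons_in_lists_iff)
    then show ?thesis using L1[OF assms(2)] by simp
  qed
  have P2: "mon_rle (Umon S m) (eps S m a) \<one>\<^bsub>Umon S m\<^esub> \<longleftrightarrow> cat_rle S m a (tgt S m a)"
  proof -
    have "mon_rle (Umon S m) (eps S m a) \<one>\<^bsub>Umon S m\<^esub> \<longleftrightarrow> (\<exists>w\<in>lists S. ucong S m (w@[a]) [])"
      unfolding mon_rle_eps[OF assms(2)] one using ucls_iff assms(2)
      by (metis append_in_lists_conv Cons_in_lists_iff lists.Nil)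
    then show ?thesis using R_parts(1)[OF assms] by simp
  qed
  have P3: "(\<not> right_invertible S m a \<longrightarrow>
             (mon_le (Umon S m) (eps S m a) b \<longleftrightarrow> cat_le S m a (nabla0 S m b)))
        \<and> (\<not> left_invertible S m a \<longrightarrow>
             (mon_rle (Umon S m) (eps S m a) b \<longleftrightarrow> cat_rle S m a (nabla1 S m b)))"
    if b: "b \<in> carrier (Umon S m) - {\<one>\<^bsub>Umon S m\<^esub>}" for b
  proof -
    obtain w0 where w0: "w0 \<in> lists S" "b = ucls S m w0" using b by (auto simp: Umon_def)
    define bs where "bs = rev (foldl (pr S m) [] w0)"
    have red: "reduced S m bs" and cb: "ucong S m w0 bs" using nf_exists[OF w0(1)] bs_def by auto
    have bL: "bs \<in> lists S" using red by (simp add: reduced_def)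
    have beq: "b = ucls S m bs" using w0(2) ucls_eq[OF cb] by simp
    have rs: "redseq S m b = bs" using redseq_eq[OF red] beq by simp
    have bne: "bs \<noteq> []" using b beq one by auto
    have E1: "mon_le (Umon S m) (eps S m a) b \<longleftrightarrow> (\<exists>w\<in>lists S. ucong S m (a#w) bs)"
      unfolding mon_le_eps[OF assms(2)] beq using ucls_iff assms(2) by (metis Cons_in_lists_iff)
    have E2: "mon_rle (Umon S m) (eps S m a) b \<longleftrightarrow> (\<exists>w\<in>lists S. ucong S m (w@[a]) bs)"
      unfolding mon_rle_eps[OF assms(2)] beq using ucls_iff assms(2)
      by (metis append_in_lists_conv Cons_in_lists_iff lists.Nil)
    show ?thesis unfolding nabla0_def nabla1_def rs E1 E2
      using L2[OF assms(2) _ red bne] R_parts(2)[OF assms _ red bne] by blast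
  qed
  show ?thesis using P1 P2 P3 by blast
qed

end
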